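(* Let $n$ be a positive integer, let $m$ be a real number with $7n^{3/5}\leq m\leq n$, and let $T\geq 0$ be an integer. Suppose that for every set $\Sigma'\subset[n]$ with $|\Sigma'|\geq m-7n^{3/5}$, every permutation of $\Sigma'$ contains a pair of close twins of length at least $T$. Then for every set $\Sigma\subset[n]$ with $|\Sigma|\geq m$, every permutation of $\Sigma$ contains a pair of close twins of length at least $T+n^{1/5}$.
   Context: A permutation of a finite set $\Sigma\subset\mathbb{N}$ is a sequence in which every element of $\Sigma$ appears exactly once; a subpermutation of a permutation is a subsequence of it. Two sequences $(a_1,\dots,a_L)$ and $(b_1,\dots,b_L)$ of distinct numbers are order-isomorphic if for all $i,j$: $a_i<a_j \iff b_i<b_j$. Two subpermutations of a permutation are called twins if they are order-isomorphic and disjoint (share no symbol); their length is their common number of entries. For a fixed $n$, twins $(a_1,\dots,a_L)$ and $(b_1,\dots,b_L)$ (where $a_i$ corresponds to $b_i$) are called close if $|b_i-a_i|\leq n^{2/5}$ for all $i$. The empty pair of subpermutations counts as close twins of length $0$. *)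

theory Defs
  imports Complex_Main "HOL-Library.Sublist"
begin

definition is_perm_of :: "nat list \<Rightarrow> nat set \<Rightarrow> bool" where
  "is_perm_of \<pi> S \<longleftrightarrow> distinct \<pi> \<and> set \<pi> = S"

definition order_iso :: "nat list \<Rightarrow> nat list \<Rightarrow> bool" where
  "order_iso a b \<longleftrightarrow> length a = length b \<and>
     (\<forall>i < length a. \<forall>j < length a. (a ! i < a ! j) \<longleftrightarrow> (b ! i < b ! j))"

definition twins :: "nat list \<Rightarrow> nat list \<Rightarrow> nat list \<Rightarrow> bool" where
  "twins \<pi> a b \<longleftrightarrow> subseq a \<pi> \<and> subseq b \<pi> \<and> order_iso a b \<and> set a \<inter> set b = {}"

definition close_twins :: "nat \<Rightarrow> nat list \<Rightarrow> nat list \<Rightarrow> nat list \<Rightarrow> bool" where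
  "close_twins n \<pi> a b \<longleftrightarrow> twins \<pi> a b \<and>
     (\<forall>i < length a. \<bar>real (b ! i) - real (a ! i)\<bar> \<le> real n powr (2/5))"

end

theory Submission
  imports Defs
begin


definition agree :: "('a \<Rightarrow> nat) \<Rightarrow> ('a \<Rightarrow> nat) \<Rightarrow> 'a set \<Rightarrow> bool" where
  "agree f g S \<longleftrightarrow> (\<forall>x\<in>S. \<forall>y\<in>S. f x < f y \<longrightarrow> g x < g y)"

lemma agree_subset: "agree f g S \<Longrightarrow> S' \<subseteq> S \<Longrightarrow> agree f g S'"
  unfolding agree_def by blast

lemma ES:
  fixes f g :: "'a \<Rightarrow> nat"
  assumes fin: "finite C" and inf: "inj_on f C" and ing: "inj_on g C"
    and cardC: "(r-1)*(s-1) < card C" and r1: "r \<ge> 1" and s1: "s \<ge> 1"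
  shows "(\<exists>S\<subseteq>C. card S = r \<and> agree f g S) \<or>
         (\<exists>S\<subseteq>C. card S = s \<and> (\<forall>x\<in>S. \<forall>y\<in>S. f x < f y \<longrightarrow> g y < g x))"
proof -
  define CH where "CH c = {S. S \<subseteq> C \<and> agree f g S \<and> c \<in> S \<and> (\<forall>y\<in>S. f y \<le> f c)}" for c
  define L where "L c = Max (card ` CH c)" for c
  have finCH: "finite (CH c)" for c
    by (rule finite_subset[of _ "Pow C"]) (auto simp: CH_def fin)
  have neCH: "c \<in> C \<Longrightarrow> {c} \<in> CH c" for c by (auto simp: CH_def agree_def)
  have Lge: "c \<in> C \<Longrightarrow> S \<in> CH c \<Longrightarrow> card S \<le> L c" for c S
    unfolding L_def by (rule Max_ge) (auto simp: finCH)
  have Lin: "c \<in> C \<Longrightarrow> \<exists>S\<in>CH c. card S = L c" for c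
  proof -
    assume "c \<in> C"
    then have "L c \<in> card ` CH c" unfolding L_def using finCH neCH by (intro Max_in) auto
    then show ?thesis by auto
  qed
  have L1: "c \<in> C \<Longrightarrow> 1 \<le> L c" for c using Lge[OF _ neCH] by fastforce
  show ?thesis
  proof (cases "\<exists>c\<in>C. r \<le> L c")
    case True
    then obtain c where c: "c \<in> C" "r \<le> L c" by auto
    obtain S where S: "S \<in> CH c" "card S = L c" using Lin[OF c(1)] by auto
    obtain S' where S': "S' \<subseteq> S" "card S' = r"
      using obtain_subset_with_card_n[of r S] S c(2) by auto
    have "S' \<subseteq> C" using S S' by (auto simp: CH_def)
    moreover have "agree f g S'" using S S' agree_subset by (auto simp: CH_def)
    ultimately show ?thesis using S' by blast
  next
    case False
    then have Lr: "c \<in> C \<Longrightarrow> L c < r" for c by force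
    define D where "D l = {c\<in>C. L c = l}" for l
    have "\<exists>l. s \<le> card (D l)"
    proof (rule ccontr)
      assume "\<not> ?thesis"
      then have lt0: "\<not> s \<le> card (D l)" for l by blast
      have lt: "card (D l) \<le> s - 1" for l using lt0[of l] by arith
      have "C = (\<Union>l\<in>{1..<r}. D l)" using Lr L1 by (auto simp: D_def)
      then have "card C \<le> (\<Sum>l\<in>{1..<r}. card (D l))" using card_UN_le[of "{1..<r}" D] by simp
      also have "\<dots> \<le> (\<Sum>l\<in>{1..<r}. s - 1)" by (intro sum_mono lt)
      also have "\<dots> = (r-1)*(s-1)" by simp
      finally show False using cardC by simp
    qed
    then obtain l where l: "s \<le> card (D l)" by auto
    obtain S' where S': "S' \<subseteq> D l" "card S' = s"
      using obtain_subset_with_card_n[of s "D l"] l by auto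
    have dec: "g y < g x" if xy: "x \<in> D l" "y \<in> D l" "f x < f y" for x y
    proof (rule ccontr)
      assume "\<not> g y < g x"
      moreover have "x \<noteq> y" using xy by auto
      moreover have "x \<in> C" "y \<in> C" using xy by (auto simp: D_def)
      ultimately have gxy: "g x < g y" using ing inj_on_eq_iff[OF ing] by (metis nat_neq_iff)
      obtain Sx where Sx: "Sx \<in> CH x" "card Sx = L x" using Lin \<open>x \<in> C\<close> by auto
      have yn: "y \<notin> Sx" using Sx xy(3) by (auto simp: CH_def)
      have le: "z \<in> Sx \<Longrightarrow> g z \<le> g x" for z
      proof -
        assume z: "z \<in> Sx"
        show "g z \<le> g x"
        proof (cases "z = x")
          case False
          have "z \<in> C" "f z \<le> f x" "x \<in> Sx" using z Sx by (auto simp: CH_def)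
          then have "f z < f x" using False inj_on_eq_iff[OF inf] \<open>x \<in> C\<close> by (metis le_neq_implies_less)
          moreover have "agree f g Sx" using Sx by (simp add: CH_def)
          ultimately show ?thesis using z \<open>x \<in> Sx\<close> unfolding agree_def by (meson less_imp_le)
        qed simp
      qed
      have SxC: "Sx \<subseteq> C" and agx: "agree f g Sx" and fx: "\<forall>z\<in>Sx. f z \<le> f x"
        using Sx by (auto simp: CH_def)
      have "agree f g (insert y Sx)"
        unfolding agree_def
      proof (intro ballI impI)
        fix z w assume zw: "z \<in> insert y Sx" "w \<in> insert y Sx" "f z < f w"
        show "g z < g w"
        proof (cases "w = y")
          case True
          then have "z \<in> Sx" using zw by auto
          then show ?thesis using le[of z] gxy True by simp
        next
          case False
          then have w: "w \<in> Sx" using zw by auto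
          then have "z \<noteq> y" using fx zw(3) xy(3) by force
          then have "z \<in> Sx" using zw by auto
          then show ?thesis using agx w zw(3) unfolding agree_def by blast
        qed
      qed
      moreover have "\<forall>z\<in>insert y Sx. f z \<le> f y" using fx xy(3) by force
      ultimately have "insert y Sx \<in> CH y" using SxC \<open>y \<in> C\<close> by (simp add: CH_def)
      then have "card (insert y Sx) \<le> L y" using Lge \<open>y \<in> C\<close> by blast
      moreover have "finite Sx" using SxC fin finite_subset by blast
      then have "card (insert y Sx) = L x + 1" using Sx(2) yn by simp
      moreover have "L x = L y" using xy by (auto simp: D_def)
      ultimately show False by simp
    qed
    have "S' \<subseteq> C" using S' by (auto simp: D_def)
    moreover have "\<forall>x\<in>S'. \<forall>y\<in>S'. f x < f y \<longrightarrow> g y < g x" using S'(1) dec by blast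
    ultimately show ?thesis using S'(2) by (intro disjI2 exI[of _ S']) simp
  qed
qed



lemma triples:
  fixes A :: "nat set" and h :: nat
  assumes "finite A"
  shows "\<exists>F. finite F \<and>
     (\<forall>T\<in>F. fst T < fst (snd T) \<and> fst (snd T) < snd (snd T) \<and>
        fst T \<in> A \<and> fst (snd T) \<in> A \<and> snd (snd T) \<in> A \<and> fst T div h = snd (snd T) div h) \<and>
     (\<forall>T\<in>F. \<forall>T'\<in>F. T \<noteq> T' \<longrightarrow> snd (snd T) < fst T' \<or> snd (snd T') < fst T) \<and>
     card A \<le> 3 * card F + 2 * card ((\<lambda>v. v div h) ` A)"
  using assms
proof (induction "card A" arbitrary: A rule: less_induct)
  case less
  show ?case
  proof (cases "A = {}")
    case True
    then show ?thesis by (intro exI[of _ "{}"]) auto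
  next
    case False
    define a where "a = Min A"
    have aA: "a \<in> A" using False less.prems by (simp add: a_def)
    have amin: "v \<in> A \<Longrightarrow> a \<le> v" for v using less.prems by (simp add: a_def)
    define \<beta> where "\<beta> = a div h"
    define B where "B = {v\<in>A. v div h = \<beta>}"
    have finB: "finite B" using less.prems by (simp add: B_def)
    have aB: "a \<in> B" using aA by (simp add: B_def \<beta>_def)
    have blk: "v \<in> A \<Longrightarrow> v \<notin> B \<Longrightarrow> \<beta> < v div h" for v
      using amin[of v] div_le_mono[of a v h] by (auto simp: B_def \<beta>_def)
    show ?thesis
    proof (cases "3 \<le> card B")
      case True
      define u1 where "u1 = Min B"
      have u1: "u1 \<in> B" "\<And>v. v \<in> B \<Longrightarrow> u1 \<le> v" using finB aB unfolding u1_def by (auto intro!: Min_in)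
      define B1 where "B1 = B - {u1}"
      have cB1: "card B1 = card B - 1" using u1 finB by (simp add: B1_def)
      then have neB1: "B1 \<noteq> {}" using True by auto
      have finB1: "finite B1" using finB by (simp add: B1_def)
      define u2 where "u2 = Min B1"
      have u2: "u2 \<in> B1" "\<And>v. v \<in> B1 \<Longrightarrow> u2 \<le> v" using Min_in[OF finB1 neB1] Min_le[OF finB1] unfolding u2_def by auto
      define B2 where "B2 = B1 - {u2}"
      have cB2: "card B2 = card B - 2" using u2 finB cB1 by (simp add: B2_def B1_def)
      then have neB2: "B2 \<noteq> {}" using True by auto
      have finB2: "finite B2" using finB by (simp add: B2_def B1_def)
      define u3 where "u3 = Min B2"
      have u3: "u3 \<in> B2" "\<And>v. v \<in> B2 \<Longrightarrow> u3 \<le> v" using Min_in[OF finB2 neB2] Min_le[OF finB2] unfolding u3_def by auto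
      have u2B: "u2 \<in> B" "u2 \<noteq> u1" using u2(1) by (auto simp: B1_def)
      have u12: "u1 < u2" using u1(2)[OF u2B(1)] u2B(2) by simp
      have u3B: "u3 \<in> B1" "u3 \<noteq> u2" using u3(1) by (auto simp: B2_def)
      have u23: "u2 < u3" using u2(2)[OF u3B(1)] u3B(2) by simp
      have uA: "u1 \<in> A" "u2 \<in> A" "u3 \<in> A" using u1 u2 u3 by (auto simp: B_def B1_def B2_def)
      have ublk: "u1 div h = \<beta>" "u3 div h = \<beta>" using u1 u2 u3 by (auto simp: B_def B1_def B2_def)
      define A' where "A' = A - {u1, u2, u3}"
      have cA': "card A' = card A - 3" using uA u12 u23 less.prems by (simp add: A'_def card_Diff_subset)
      have "card A' < card A" using cA' True finB less.prems B_def card_mono[of A B]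
        by (metis (no_types, lifting) aA card_gt_0_iff diff_less empty_iff zero_less_numeral)
      then obtain F where F: "finite F"
        "\<forall>T\<in>F. fst T < fst (snd T) \<and> fst (snd T) < snd (snd T) \<and>
        fst T \<in> A' \<and> fst (snd T) \<in> A' \<and> snd (snd T) \<in> A' \<and> fst T div h = snd (snd T) div h"
        "\<forall>T\<in>F. \<forall>T'\<in>F. T \<noteq> T' \<longrightarrow> snd (snd T) < fst T' \<or> snd (snd T') < fst T"
        "card A' \<le> 3 * card F + 2 * card ((\<lambda>v. v div h) ` A')"
        using less.hyps[of A'] less.prems by (auto simp: A'_def)
      have above: "v \<in> A' \<Longrightarrow> u3 < v" for v
      proof -
        assume v: "v \<in> A'"
        show "u3 < v"
        proof (cases "v \<in> B")
          case True
          then have "v \<in> B2" "v \<noteq> u3" using v by (auto simp: A'_def B1_def B2_def)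
          then show ?thesis using u3(2) by force
        next
          case False
          then have "\<beta> < v div h" using blk v by (auto simp: A'_def)
          then show ?thesis using ublk(2) by (metis div_le_mono not_le)
        qed
      qed
      define T0 where "T0 = (u1, u2, u3)"
      have T0F: "T0 \<notin> F" using F(2) by (auto simp: T0_def A'_def)
      show ?thesis
      proof (intro exI[of _ "insert T0 F"] conjI)
        show "finite (insert T0 F)" using F by simp
        show "\<forall>T\<in>insert T0 F. fst T < fst (snd T) \<and> fst (snd T) < snd (snd T) \<and>
          fst T \<in> A \<and> fst (snd T) \<in> A \<and> snd (snd T) \<in> A \<and> fst T div h = snd (snd T) div h"
          using F(2) uA u12 u23 ublk by (auto simp: T0_def A'_def)
        show "\<forall>T\<in>insert T0 F. \<forall>T'\<in>insert T0 F. T \<noteq> T' \<longrightarrow> snd (snd T) < fst T' \<or> snd (snd T') < fst T"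
          using F(2,3) above by (auto simp: T0_def)
        have "card ((\<lambda>v. v div h) ` A') \<le> card ((\<lambda>v. v div h) ` A)"
          using less.prems by (intro card_mono) (auto simp: A'_def)
        moreover have "card (insert T0 F) = card F + 1" using F(1) T0F by simp
        ultimately show "card A \<le> 3 * card (insert T0 F) + 2 * card ((\<lambda>v. v div h) ` A)"
          using F(4) cA' True card_mono[of A B] less.prems by (auto simp: B_def)
      qed
    next
      case False
      define A' where "A' = A - B"
      have cA': "card A' = card A - card B" using less.prems by (simp add: A'_def B_def card_Diff_subset)
      have "card B \<le> card A" using less.prems by (intro card_mono) (auto simp: B_def)
      have "0 < card B" using aB finB card_gt_0_iff by blast
      then have "card A' < card A" using cA' \<open>card B \<le> card A\<close> by linarith
      then obtain F where F: "finite F"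
        "\<forall>T\<in>F. fst T < fst (snd T) \<and> fst (snd T) < snd (snd T) \<and>
        fst T \<in> A' \<and> fst (snd T) \<in> A' \<and> snd (snd T) \<in> A' \<and> fst T div h = snd (snd T) div h"
        "\<forall>T\<in>F. \<forall>T'\<in>F. T \<noteq> T' \<longrightarrow> snd (snd T) < fst T' \<or> snd (snd T') < fst T"
        "card A' \<le> 3 * card F + 2 * card ((\<lambda>v. v div h) ` A')"
        using less.hyps[of A'] less.prems by (auto simp: A'_def)
      have sub: "(\<lambda>v. v div h) ` A' \<subseteq> (\<lambda>v. v div h) ` A - {\<beta>}" by (auto simp: A'_def B_def)
      have "\<beta> \<in> (\<lambda>v. v div h) ` A" using aA by (auto simp: \<beta>_def)
      then have "card ((\<lambda>v. v div h) ` A - {\<beta>}) = card ((\<lambda>v. v div h) ` A) - 1"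
        using less.prems by simp
      moreover have "card ((\<lambda>v. v div h) ` A') \<le> card ((\<lambda>v. v div h) ` A - {\<beta>})"
        using less.prems sub by (intro card_mono) auto
      moreover have "card ((\<lambda>v. v div h) ` A) \<ge> 1" using \<open>\<beta> \<in> _\<close> less.prems
        by (metis One_nat_def Suc_leI card_gt_0_iff empty_iff finite_imageI)
      ultimately have "card ((\<lambda>v. v div h) ` A') + 1 \<le> card ((\<lambda>v. v div h) ` A)" by linarith
      then show ?thesis using F False cA' \<open>card B \<le> card A\<close>
        by (intro exI[of _ F]) (auto simp: A'_def)
    qed
  qed
qed



definition idx :: "nat list \<Rightarrow> nat \<Rightarrow> nat" where
  "idx P x = (LEAST i. i < length P \<and> P ! i = x)"

lemma idx_nth: "distinct P \<Longrightarrow> i < length P \<Longrightarrow> idx P (P ! i) = i"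
  unfolding idx_def by (rule Least_equality) (auto simp: nth_eq_iff_index_eq)

lemma inj_idx: "distinct P \<Longrightarrow> inj_on (idx P) (set P)"
  by (auto simp: inj_on_def in_set_conv_nth idx_nth)

lemma sorted_idx: "distinct P \<Longrightarrow> sorted_wrt (\<lambda>a b. idx P a < idx P b) P"
  by (simp add: sorted_wrt_iff_nth_less idx_nth)

lemma sorted_idx_filter: "distinct P \<Longrightarrow> sorted_wrt (\<lambda>a b. idx P a < idx P b) (filter Q P)"
  using sorted_idx sorted_wrt_filter by blast

lemma list_unique:
  assumes "distinct P" "set L1 = set L2" "set L1 \<subseteq> set P"
    "sorted_wrt (\<lambda>a b. idx P a < idx P b) L1" "sorted_wrt (\<lambda>a b. idx P a < idx P b) L2"
  shows "L1 = L2"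
proof -
  have "sorted_wrt (<) (map (idx P) L1)" "sorted_wrt (<) (map (idx P) L2)"
    using assms(4,5) by (simp_all add: sorted_wrt_map)
  then have "map (idx P) L1 = map (idx P) L2"
    using assms(2) by (intro sorted_distinct_set_unique) (auto simp: strict_sorted_iff)
  moreover have "inj_on (idx P) (set L1 \<union> set L2)"
    using assms(1,2,3) inj_idx inj_on_subset by (metis sup.idem)
  ultimately show ?thesis using inj_on_map_eq_map by blast
qed

lemma TW:
  assumes dP: "distinct P" and g1P: "g1 ` S \<subseteq> set P" and g2P: "g2 ` S \<subseteq> set P"
    and i1: "inj_on g1 S" and i2: "inj_on g2 S"
    and ag: "\<forall>T\<in>S. \<forall>T'\<in>S. idx P (g1 T) < idx P (g1 T') \<longrightarrow> idx P (g2 T) < idx P (g2 T')"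
  shows "\<exists>Ls. distinct Ls \<and> set Ls = S \<and> filter (\<lambda>v. v \<in> g1 ` S) P = map g1 Ls
           \<and> filter (\<lambda>v. v \<in> g2 ` S) P = map g2 Ls"
proof -
  define xs where "xs = filter (\<lambda>v. v \<in> g1 ` S) P"
  define Ls where "Ls = map (inv_into S g1) xs"
  have sx: "set xs = g1 ` S" using g1P by (auto simp: xs_def)
  have m1: "map g1 Ls = xs" unfolding Ls_def map_map
    by (rule map_idI) (use sx in \<open>auto simp: f_inv_into_f\<close>)
  have sL: "set Ls = S" unfolding Ls_def using sx i1 by simp
  have dx: "distinct xs" using dP by (simp add: xs_def)
  then have dL: "distinct Ls" using m1 distinct_map by metis
  have "sorted_wrt (\<lambda>a b. idx P a < idx P b) xs" using dP by (simp add: xs_def sorted_idx_filter)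
  then have "sorted_wrt (\<lambda>a b. idx P a < idx P b) (map g1 Ls)" using m1 by simp
  then have "sorted_wrt (\<lambda>T T'. idx P (g1 T) < idx P (g1 T')) Ls"
    by (simp add: sorted_wrt_map)
  then have "sorted_wrt (\<lambda>T T'. idx P (g2 T) < idx P (g2 T')) Ls"
    by (rule sorted_wrt_mono_rel[rotated]) (use ag sL in blast)
  then have s2: "sorted_wrt (\<lambda>a b. idx P a < idx P b) (map g2 Ls)"
    by (simp add: sorted_wrt_map)
  have f2: "filter (\<lambda>v. v \<in> g2 ` S) P = map g2 Ls"
    by (rule list_unique[OF dP]) (use g2P sL s2 dP sorted_idx_filter in auto)
  have f1: "filter (\<lambda>v. v \<in> g1 ` S) P = map g1 Ls" using m1 by (simp add: xs_def)
  show ?thesis using dL sL f1 f2 by (intro exI[of _ Ls]) simp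
qed

lemma oi_map:
  "(\<forall>T\<in>set Ls. \<forall>T'\<in>set Ls. g1 T < g1 T' \<longleftrightarrow> g2 T < g2 T') \<Longrightarrow> order_iso (map g1 Ls) (map g2 Ls)"
  by (auto simp: order_iso_def)

lemma oi_app:
  assumes "order_iso xs ys" "order_iso a b"
    "\<forall>i<length xs. \<forall>j<length a. (xs!i < a!j \<longleftrightarrow> ys!i < b!j) \<and> (a!j < xs!i \<longleftrightarrow> b!j < ys!i)"
  shows "order_iso (xs@a) (ys@b)"
proof -
  have l: "length xs = length ys" "length a = length b" using assms(1,2) by (auto simp: order_iso_def)
  show ?thesis unfolding order_iso_def
  proof (intro conjI allI impI)
    show "length (xs @ a) = length (ys @ b)" using l by simp
    fix i j assume ij: "i < length (xs @ a)" "j < length (xs @ a)"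
    show "((xs @ a) ! i < (xs @ a) ! j) = ((ys @ b) ! i < (ys @ b) ! j)"
    proof (cases "i < length xs"; cases "j < length xs")
      assume "i < length xs" "j < length xs"
      then show ?thesis using assms(1) l by (simp add: nth_append order_iso_def)
    next
      assume "i < length xs" "\<not> j < length xs"
      then show ?thesis using assms(3) l ij by (simp add: nth_append)
    next
      assume "\<not> i < length xs" "j < length xs"
      then show ?thesis using assms(3) l ij by (simp add: nth_append)
    next
      assume "\<not> i < length xs" "\<not> j < length xs"
      then show ?thesis using assms(2) l ij by (simp add: nth_append order_iso_def)
    qed
  qed
qed

lemma prot_aux:
  fixes x a h :: nat
  assumes "0 < h" "a div h \<noteq> x div h"
  shows "x < a \<longleftrightarrow> x div h < a div h"
proof
  assume "x < a"
  then have "x div h \<le> a div h" by (simp add: div_le_mono)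
  then show "x div h < a div h" using assms(2) by simp
next
  assume l: "x div h < a div h"
  show "x < a"
  proof (rule ccontr)
    assume "\<not> x < a"
    then have "a div h \<le> x div h" by (simp add: div_le_mono)
    then show False using l by simp
  qed
qed

lemma prot:
  fixes x y a b h :: nat
  assumes h: "0 < h" and xy: "x div h = y div h" and a: "a div h \<noteq> x div h" and b: "b div h \<noteq> x div h"
    and ab: "a < b + h" "b < a + h"
  shows "(x < a \<longleftrightarrow> y < b) \<and> (a < x \<longleftrightarrow> b < y)"
proof -
  have 1: "x < a \<longleftrightarrow> x div h < a div h" using prot_aux h a by blast
  have 2: "y < b \<longleftrightarrow> y div h < b div h" using prot_aux h b xy by metis
  have far: False if "u div h < w div h" "w div h < v div h" "v < u + h" for u v w :: nat
  proof -
    have A: "u div h * h + u mod h = u" by simp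
    have B: "u mod h < h" using h by simp
    have C: "(u div h + 1) * h \<le> w div h * h" using that(1) by (intro mult_le_mono1) simp
    have D: "(w div h + 1) * h \<le> v div h * h" using that(2) by (intro mult_le_mono1) simp
    have E: "v div h * h \<le> v" by (simp add: div_times_less_eq_dividend)
    have C': "u div h * h + h \<le> w div h * h" using C by (simp add: distrib_right)
    have D': "w div h * h + h \<le> v div h * h" using D by (simp add: distrib_right)
    show False using A B C' D' E that(3) by linarith
  qed
  have 3: "x div h < a div h \<longleftrightarrow> y div h < b div h"
  proof
    assume "x div h < a div h"
    show "y div h < b div h"
    proof (rule ccontr)
      assume "\<not> y div h < b div h"
      then have "b div h < x div h" using b xy by simp
      then show False using far[of b x a] \<open>x div h < a div h\<close> ab by linarith
    qed
  next
    assume "y div h < b div h"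
    show "x div h < a div h"
    proof (rule ccontr)
      assume "\<not> x div h < a div h"
      then have "a div h < x div h" using a by simp
      then show False using far[of a y b] \<open>y div h < b div h\<close> ab xy by linarith
    qed
  qed
  have "a \<noteq> x" "b \<noteq> y" using a b xy by auto
  moreover have e1: "x < a \<longleftrightarrow> y < b" using 1 2 3 by simp
  ultimately show ?thesis by arith
qed



lemma three:
  fixes f1 f2 f3 :: "'a \<Rightarrow> nat"
  assumes fin: "finite C" and i1: "inj_on f1 C" and i2: "inj_on f2 C" and i3: "inj_on f3 C"
    and k1: "1 \<le> k" and cC: "(k-1)^3 < card C"
  shows "\<exists>S\<subseteq>C. card S = k \<and> (agree f1 f2 S \<or> agree f1 f3 S \<or> agree f2 f3 S)"
proof -
  have c1: "(k-1)*((k-1)^2+1-1) < card C" using cC by (simp add: power3_eq_cube power2_eq_square)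
  have s1: "1 \<le> (k-1)^2+1" by simp
  from ES[OF fin i1 i2 c1 k1 s1] show ?thesis
  proof (elim disjE exE conjE)
    fix S assume "S \<subseteq> C" "card S = k" "agree f1 f2 S"
    then show ?thesis by blast
  next
    fix D assume D: "D \<subseteq> C" "card D = (k-1)^2+1" "\<forall>x\<in>D. \<forall>y\<in>D. f1 x < f1 y \<longrightarrow> f2 y < f2 x"
    have finD: "finite D" using D fin finite_subset by blast
    have c2: "(k-1)*(k-1) < card D" using D by (simp add: power2_eq_square)
    from ES[OF finD inj_on_subset[OF i1 D(1)] inj_on_subset[OF i3 D(1)] c2 k1 k1] show ?thesis
    proof (elim disjE exE conjE)
      fix S assume "S \<subseteq> D" "card S = k" "agree f1 f3 S"
      then show ?thesis using D by blast
    next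
      fix S assume S: "S \<subseteq> D" "card S = k" "\<forall>x\<in>S. \<forall>y\<in>S. f1 x < f1 y \<longrightarrow> f3 y < f3 x"
      have "agree f2 f3 S" unfolding agree_def
      proof (intro ballI impI)
        fix x y assume xy: "x \<in> S" "y \<in> S" "f2 x < f2 y"
        then have "x \<noteq> y" by auto
        have xyC: "x \<in> C" "y \<in> C" using xy S D by auto
        have "\<not> f1 x < f1 y" using D(3) xy S by (meson less_not_sym subsetD)
        moreover have "f1 x \<noteq> f1 y" using inj_onD[OF i1 _ xyC] \<open>x \<noteq> y\<close> by blast
        ultimately have "f1 y < f1 x" by simp
        then show "f3 x < f3 y" using S(3) xy by blast
      qed
      then show ?thesis using S D by blast
    qed
  qed
qed

lemma same_block_close:
  fixes u v h :: nat
  assumes "0 < h" "u div h = v div h"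
  shows "u < v + h"
proof -
  have "u mod h < h" using assms by simp
  moreover have "u div h * h + u mod h = u" by simp
  moreover have "v div h * h \<le> v" by simp
  moreover have "u div h * h = v div h * h" using assms(2) by simp
  ultimately show ?thesis by linarith
qed

lemma block_between:
  fixes u v w h :: nat
  assumes "u \<le> w" "w \<le> v" "u div h = v div h"
  shows "w div h = u div h"
proof -
  have "u div h \<le> w div h" "w div h \<le> v div h" using assms(1,2) by (simp_all add: div_le_mono)
  then show ?thesis using assms(3) by simp
qed



lemma arith1:
  fixes A C D E :: real
  assumes "A \<le> 3*C + 2*(D+1)" "5*E+2 \<le> A" "D \<le> E"
  shows "E \<le> C"
proof -
  have "A \<le> 3*C + 2*D + 2" using assms(1) by simp
  then show ?thesis using assms(2,3) by linarith
qed

theorem mainTheorem3: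
  fixes n T :: nat and m :: real
  assumes "n > 0"
    and "7 * real n powr (3/5) \<le> m" and "m \<le> real n"
    and "\<forall>S'. S' \<subseteq> {1..n} \<and> real (card S') \<ge> m - 7 * real n powr (3/5) \<longrightarrow>
           (\<forall>\<pi>. is_perm_of \<pi> S' \<longrightarrow> (\<exists>a b. close_twins n \<pi> a b \<and> length a \<ge> T))"
  shows "\<forall>S. S \<subseteq> {1..n} \<and> real (card S) \<ge> m \<longrightarrow>
           (\<forall>\<pi>. is_perm_of \<pi> S \<longrightarrow>
              (\<exists>a b. close_twins n \<pi> a b \<and> real (length a) \<ge> real T + real n powr (1/5)))"
proof (intro allI impI)
  fix S \<pi>
  assume SH: "S \<subseteq> {1..n} \<and> m \<le> real (card S)" and pp: "is_perm_of \<pi> S"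
  define s where "s = real n powr (1/5)"
  have s0: "0 < s" using assms(1) by (simp add: s_def)
  have s2: "real n powr (2/5) = s^2" by (simp add: s_def power2_eq_square powr_add[symmetric])
  have s3: "real n powr (3/5) = s^3" by (simp add: s_def power3_eq_cube powr_add[symmetric])
  have s5: "real n = s^5"
  proof -
    have "s^5 = s powr 5" using s0 by simp
    also have "\<dots> = real n" by (simp add: s_def powr_powr)
    finally show ?thesis by simp
  qed
  have s27: "7 \<le> s^2"
  proof -
    have a: "7 * s^3 \<le> s^5" using assms(2,3) s3 s5 by linarith
    have b: "s^5 = s^2 * s^3" by (simp flip: power_add)
    have "0 < s^3" using s0 by simp
    then show ?thesis using a b mult_le_cancel_right_pos by metis
  qed
  have s2ge: "2 \<le> s"
  proof (rule power2_le_imp_le)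
    show "2^2 \<le> s^2" using s27 by simp
    show "0 \<le> s" using s0 by simp
  qed
  define t where "t = s^2"
  have s3t: "s^3 = s * t" by (simp add: t_def power2_eq_square power3_eq_cube)
  have t7: "7 \<le> t" using s27 by (simp add: t_def)
  have s38: "8 \<le> s^3"
  proof -
    have "2 * 7 \<le> s * t" using s2ge t7 by (intro mult_mono) auto
    then show ?thesis using s3t by simp
  qed
  define k where "k = nat \<lceil>s\<rceil>"
  have k: "s \<le> real k" "real k < s + 1" "1 \<le> k" using s0 by (auto simp: k_def) linarith+
  define h where "h = nat \<lfloor>t\<rfloor> + 1"
  have h: "t < real h" "real h \<le> t + 1" "0 < h" "real (h - 1) \<le> t" using t7
    by (auto simp: h_def) linarith+
  define p where "p = nat \<lceil>5 * s^3\<rceil> + 2"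
  have p: "5 * s^3 + 2 \<le> real p" "real p \<le> 5 * s^3 + 3" using s38 by (auto simp: p_def) linarith+
  have kh: "real k * real h \<le> (s + 1) * (t + 1)" using k h by (intro mult_mono) auto
  have budget: "real p + real k * real h \<le> 7 * s^3"
  proof -
    have "1 * 6 \<le> (s - 1) * (t - 1)" using s2ge t7 by (intro mult_mono) auto
    then show ?thesis using kh p s3t by (simp add: algebra_simps)
  qed
  have d\<pi>: "distinct \<pi>" and set\<pi>: "set \<pi> = S" using pp by (auto simp: is_perm_of_def)
  have len\<pi>: "length \<pi> = card S" using distinct_card[OF d\<pi>] set\<pi> by simp
  have "real p \<le> real (length \<pi>)" using p s38 assms(2) s3 SH len\<pi> by linarith
  then have pl: "p \<le> length \<pi>" by simp
  define P where "P = take p \<pi>"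
  define Q where "Q = drop p \<pi>"
  have PQ: "\<pi> = P @ Q" by (simp add: P_def Q_def)
  have lenP: "length P = p" using pl by (simp add: P_def)
  have dP: "distinct P" and dQ: "distinct Q" and PQdis: "set P \<inter> set Q = {}"
    using d\<pi> PQ by (metis distinct_append)+
  have lenQ: "length Q = card S - p" using len\<pi> by (simp add: Q_def)
  have PS: "set P \<subseteq> {1..n}" "set Q \<subseteq> {1..n}" using SH set\<pi> PQ by auto
  obtain F where Ffin: "finite F"
    and Fp: "\<forall>T\<in>F. fst T < fst (snd T) \<and> fst (snd T) < snd (snd T) \<and>
        fst T \<in> set P \<and> fst (snd T) \<in> set P \<and> snd (snd T) \<in> set P \<and> fst T div h = snd (snd T) div h"
    and Fs: "\<forall>T\<in>F. \<forall>T'\<in>F. T \<noteq> T' \<longrightarrow> snd (snd T) < fst T' \<or> snd (snd T') < fst T"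
    and Fc: "card (set P) \<le> 3 * card F + 2 * card ((\<lambda>v. v div h) ` set P)"
    using triples[of "set P" h] by blast
  have nb: "card ((\<lambda>v. v div h) ` set P) \<le> n div h + 1"
  proof -
    have "(\<lambda>v. v div h) ` set P \<subseteq> {0..n div h}"
    proof
      fix x assume "x \<in> (\<lambda>v. v div h) ` set P"
      then obtain v where v: "v \<in> set P" "x = v div h" by auto
      then have "v \<le> n" using PS(1) by auto
      then show "x \<in> {0..n div h}" using v(2) div_le_mono by simp
    qed
    from card_mono[OF finite_atLeastAtMost this] show ?thesis by simp
  qed
  have ndh: "real (n div h) \<le> s^3"
  proof -
    have "real (n div h) * real h \<le> real n"
      by (metis div_times_less_eq_dividend of_nat_le_iff of_nat_mult)
    moreover have "real (n div h) * t \<le> real (n div h) * real h"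
      using h(1) by (intro mult_left_mono) auto
    moreover have "s^3 * t = real n" using s5 by (simp add: t_def flip: power_add)
    ultimately have "real (n div h) * t \<le> s^3 * t" by linarith
    moreover have "0 < t" using t7 by simp
    ultimately show ?thesis using mult_le_cancel_right_pos by metis
  qed
  have "card (set P) = p" using distinct_card[OF dP] lenP by simp
  then have pF: "p \<le> 3 * card F + 2 * card ((\<lambda>v. v div h) ` set P)" using Fc by simp
  have "3 * card F + 2 * card ((\<lambda>v. v div h) ` set P) \<le> 3 * card F + 2 * (n div h + 1)" using nb by simp
  then have "p \<le> 3 * card F + 2 * (n div h + 1)" using pF by (rule le_trans[rotated])
  then have "real p \<le> real (3 * card F + 2 * (n div h + 1))" by (simp only: of_nat_le_iff)
  then have "real p \<le> 3 * real (card F) + 2 * (real (n div h) + 1)" by simp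
  then have cF: "s^3 \<le> real (card F)" using p(1) ndh by (rule arith1)
  have "real ((k-1)^3) < s^3"
  proof -
    have "real (k-1) < s" using k by (simp add: of_nat_diff)
    then show ?thesis by (metis of_nat_0_le_iff of_nat_power power_strict_mono zero_less_numeral)
  qed
  then have ck: "(k-1)^3 < card F" using cF by linarith
  define c1 :: "nat \<times> nat \<times> nat \<Rightarrow> nat" where "c1 = fst"
  define c2 :: "nat \<times> nat \<times> nat \<Rightarrow> nat" where "c2 = (\<lambda>T. fst (snd T))"
  define c3 :: "nat \<times> nat \<times> nat \<Rightarrow> nat" where "c3 = (\<lambda>T. snd (snd T))"
  define G where "G = {c1, c2, c3}"
  have Gbnd: "g \<in> G \<Longrightarrow> T \<in> F \<Longrightarrow> fst T \<le> g T \<and> g T \<le> snd (snd T) \<and> g T \<in> set P" for g T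
    using Fp by (auto simp: G_def c1_def c2_def c3_def)
  have Gsep: "g \<in> G \<Longrightarrow> g' \<in> G \<Longrightarrow> T \<in> F \<Longrightarrow> T' \<in> F \<Longrightarrow> T \<noteq> T' \<Longrightarrow> snd (snd T) < fst T' \<Longrightarrow> g T < g' T'"
    for g g' T T' using Gbnd[of g T] Gbnd[of g' T'] by linarith
  have Gneq: "g \<in> G \<Longrightarrow> g' \<in> G \<Longrightarrow> T \<in> F \<Longrightarrow> T' \<in> F \<Longrightarrow> T \<noteq> T' \<Longrightarrow> g T \<noteq> g' T'" for g g' T T'
    using Gsep[of g g' T T'] Gsep[of g' g T' T] Fs by fastforce
  have Ginj: "g \<in> G \<Longrightarrow> inj_on g F" for g using Gneq by (meson inj_onI)
  have Gidx: "g \<in> G \<Longrightarrow> inj_on (\<lambda>T. idx P (g T)) F" for g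
  proof -
    assume g: "g \<in> G"
    show ?thesis
    proof (rule inj_onI)
      fix T T' assume "T \<in> F" "T' \<in> F" "idx P (g T) = idx P (g T')"
      then have "g T = g T'" using inj_idx[OF dP] Gbnd[OF g] by (meson inj_onD)
      then show "T = T'" using Ginj[OF g] \<open>T \<in> F\<close> \<open>T' \<in> F\<close> by (meson inj_onD)
    qed
  qed
  have Gblk: "g \<in> G \<Longrightarrow> T \<in> F \<Longrightarrow> g T div h = fst T div h" for g T
  proof -
    assume gT: "g \<in> G" "T \<in> F"
    have "fst T \<le> g T" "g T \<le> snd (snd T)" using Gbnd[OF gT] by auto
    moreover have "fst T div h = snd (snd T) div h" using Fp gT(2) by blast
    ultimately show ?thesis by (rule block_between)
  qed
  have cG: "c1 \<in> G" "c2 \<in> G" "c3 \<in> G" by (auto simp: G_def)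
  have c12: "T \<in> F \<Longrightarrow> c1 T \<noteq> c2 T" "T \<in> F \<Longrightarrow> c1 T \<noteq> c3 T" "T \<in> F \<Longrightarrow> c2 T \<noteq> c3 T" for T
    using Fp by (auto simp: c1_def c2_def c3_def)
  obtain S0 where S0: "S0 \<subseteq> F" "card S0 = k"
    and ag3: "agree (\<lambda>T. idx P (c1 T)) (\<lambda>T. idx P (c2 T)) S0 \<or> agree (\<lambda>T. idx P (c1 T)) (\<lambda>T. idx P (c3 T)) S0
       \<or> agree (\<lambda>T. idx P (c2 T)) (\<lambda>T. idx P (c3 T)) S0"
    using three[OF Ffin Gidx[OF cG(1)] Gidx[OF cG(2)] Gidx[OF cG(3)] k(3) ck] by blast
  obtain g1 g2 where g: "g1 \<in> G" "g2 \<in> G" "\<forall>T\<in>F. g1 T \<noteq> g2 T"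
    and ag: "agree (\<lambda>T. idx P (g1 T)) (\<lambda>T. idx P (g2 T)) S0"
  proof -
    from ag3 show ?thesis
    proof (elim disjE)
      assume "agree (\<lambda>T. idx P (c1 T)) (\<lambda>T. idx P (c2 T)) S0"
      then show ?thesis using that[of c1 c2] cG c12 by blast
    next
      assume "agree (\<lambda>T. idx P (c1 T)) (\<lambda>T. idx P (c3 T)) S0"
      then show ?thesis using that[of c1 c3] cG c12 by blast
    next
      assume "agree (\<lambda>T. idx P (c2 T)) (\<lambda>T. idx P (c3 T)) S0"
      then show ?thesis using that[of c2 c3] cG c12 by blast
    qed
  qed
  have S0F: "T \<in> S0 \<Longrightarrow> T \<in> F" for T using S0 by auto
  have finS0: "finite S0" using S0 Ffin finite_subset by blast
  have vag: "\<forall>T\<in>S0. \<forall>T'\<in>S0. g1 T < g1 T' \<longleftrightarrow> g2 T < g2 T'"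
  proof (intro ballI)
    fix T T' assume TT: "T \<in> S0" "T' \<in> S0"
    show "g1 T < g1 T' \<longleftrightarrow> g2 T < g2 T'"
    proof (cases "T = T'")
      case False
      then have "snd (snd T) < fst T' \<or> snd (snd T') < fst T" using Fs TT S0F by blast
      then show ?thesis using Gsep[OF g(1) g(1)] Gsep[OF g(2) g(2)] TT S0F False
        by (metis less_not_sym)
    qed simp
  qed
  obtain Ls where Ls: "distinct Ls" "set Ls = S0" "filter (\<lambda>v. v \<in> g1 ` S0) P = map g1 Ls"
    "filter (\<lambda>v. v \<in> g2 ` S0) P = map g2 Ls"
  proof -
    have "\<exists>Ls. distinct Ls \<and> set Ls = S0 \<and> filter (\<lambda>v. v \<in> g1 ` S0) P = map g1 Ls
           \<and> filter (\<lambda>v. v \<in> g2 ` S0) P = map g2 Ls"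
    proof (rule TW[OF dP])
      show "g1 ` S0 \<subseteq> set P" "g2 ` S0 \<subseteq> set P" using Gbnd g S0F by auto
      show "inj_on g1 S0" "inj_on g2 S0" using Ginj g(1,2) S0(1) inj_on_subset by blast+
      show "\<forall>T\<in>S0. \<forall>T'\<in>S0. idx P (g1 T) < idx P (g1 T') \<longrightarrow> idx P (g2 T) < idx P (g2 T')"
        using ag by (simp add: agree_def)
    qed
    then show ?thesis using that by blast
  qed
  define xs where "xs = map g1 Ls"
  define ys where "ys = map g2 Ls"
  have lenxs: "length xs = k" "length ys = k" using distinct_card[OF Ls(1)] Ls(2) S0(2) by (simp_all add: xs_def ys_def)
  have oixy: "order_iso xs ys" unfolding xs_def ys_def using vag Ls(2) by (intro oi_map) auto
  have xsP: "subseq xs P" "subseq ys P" using Ls(3,4) by (metis subseq_filter_left xs_def ys_def)+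
  have setxs: "set xs \<subseteq> set P" "set ys \<subseteq> set P" using xsP by (auto dest: list_emb_set)
  define U where "U = (\<lambda>v. v div h) ` set xs"
  have cU: "card U \<le> k"
    unfolding U_def using card_image_le[of "set xs" "\<lambda>v. v div h"] card_length[of xs] lenxs by simp
  have xblk: "i < k \<Longrightarrow> xs ! i div h \<in> U \<and> ys ! i div h = xs ! i div h" for i
  proof -
    assume i: "i < k"
    then have "i < length Ls" using lenxs by (simp add: xs_def)
    then have "Ls ! i \<in> set Ls" by (rule nth_mem)
    then have T: "Ls ! i \<in> F" using Ls(2) S0F by simp
    have il: "i < length Ls" using i lenxs by (simp add: xs_def)
    have xi: "xs ! i = g1 (Ls ! i)" "ys ! i = g2 (Ls ! i)" using il by (simp_all add: xs_def ys_def)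
    have "xs ! i \<in> set xs" using il by (simp add: xs_def)
    then have "xs ! i div h \<in> U" by (simp add: U_def)
    moreover have "ys ! i div h = xs ! i div h" using xi Gblk[OF g(1) T] Gblk[OF g(2) T] by simp
    ultimately show ?thesis by simp
  qed
  define S' where "S' = {v \<in> set Q. v div h \<notin> U}"
  define \<pi>' where "\<pi>' = filter (\<lambda>v. v div h \<notin> U) Q"
  have pp': "is_perm_of \<pi>' S'" using dQ by (auto simp: is_perm_of_def \<pi>'_def S'_def)
  have S'sub: "S' \<subseteq> {1..n}" using PS by (auto simp: S'_def)
  have cardS': "m - 7 * real n powr (3/5) \<le> real (card S')"
  proof -
    define W where "W = {v. v div h \<in> U}"
    have S'eq: "S' = set Q - (set Q \<inter> W)" by (auto simp: S'_def W_def)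
    have finU: "finite U" by (simp add: U_def)
    have "set Q \<inter> W \<subseteq> (\<Union>\<beta>\<in>U. {\<beta>*h..<\<beta>*h+h})"
    proof
      fix v assume "v \<in> set Q \<inter> W"
      then have "v div h \<in> U" by (simp add: W_def)
      moreover have "v \<in> {v div h * h..<v div h * h + h}"
        using h(3) div_times_less_eq_dividend[of v h] same_block_close[of h v "v div h * h"]
        by (simp add: add.commute)
      ultimately show "v \<in> (\<Union>\<beta>\<in>U. {\<beta>*h..<\<beta>*h+h})" by blast
    qed
    then have "card (set Q \<inter> W) \<le> card (\<Union>\<beta>\<in>U. {\<beta>*h..<\<beta>*h+h})" by (intro card_mono) (use finU in auto)
    also have "\<dots> \<le> (\<Sum>\<beta>\<in>U. card {\<beta>*h..<\<beta>*h+h})" using finU by (rule card_UN_le)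
    also have "\<dots> = card U * h" by simp
    also have "\<dots> \<le> k * h" using cU by simp
    finally have cW: "card (set Q \<inter> W) \<le> k * h" .
    have "card S' = card (set Q) - card (set Q \<inter> W)" unfolding S'eq
      by (simp add: card_Diff_subset)
    moreover have "card (set Q) = card S - p" using distinct_card[OF dQ] lenQ by simp
    moreover have "card (set Q \<inter> W) \<le> card (set Q)" by (simp add: card_mono)
    ultimately have "real (card S') = real (card S) - real p - real (card (set Q \<inter> W))"
      using pl len\<pi> by (simp add: of_nat_diff)
    moreover have "real (card (set Q \<inter> W)) \<le> real k * real h" using cW
      by (metis of_nat_le_iff of_nat_mult)
    ultimately show ?thesis using budget s3 SH by linarith
  qed
  obtain a b where ab: "close_twins n \<pi>' a b" "T \<le> length a"
  proof -
    have "\<forall>\<pi>. is_perm_of \<pi> S' \<longrightarrow> (\<exists>a b. close_twins n \<pi> a b \<and> length a \<ge> T)"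
      using assms(4) S'sub cardS' by blast
    then show ?thesis using pp' that by blast
  qed
  have tab: "subseq a \<pi>'" "subseq b \<pi>'" "order_iso a b" "set a \<inter> set b = {}"
    and cab: "\<forall>i < length a. \<bar>real (b ! i) - real (a ! i)\<bar> \<le> t"
    using ab(1) s2 by (auto simp: close_twins_def twins_def t_def)
  have lab: "length a = length b" using tab(3) by (simp add: order_iso_def)
  have \<pi>'Q: "subseq \<pi>' Q" by (simp add: \<pi>'_def)
  have aQ: "subseq a Q" "subseq b Q" using tab(1,2) \<pi>'Q subseq_order.trans by blast+
  have setab: "set a \<subseteq> S'" "set b \<subseteq> S'" using tab(1,2) pp' by (auto simp: is_perm_of_def dest: list_emb_set)
  have abblk: "v \<in> set a \<union> set b \<Longrightarrow> v div h \<notin> U" for v using setab by (auto simp: S'_def)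
  have abQ: "set a \<subseteq> set Q" "set b \<subseteq> set Q" using setab by (auto simp: S'_def)
  show "\<exists>a b. close_twins n \<pi> a b \<and> real T + real n powr (1/5) \<le> real (length a)"
  proof (intro exI conjI)
    show "real T + real n powr (1/5) \<le> real (length (xs @ a))"
      using ab(2) lenxs k s_def by simp
    have sub: "subseq (xs @ a) \<pi>" "subseq (ys @ b) \<pi>" unfolding PQ
      using xsP aQ by (auto intro: list_emb_append_mono)
    have oi: "order_iso (xs @ a) (ys @ b)"
    proof (rule oi_app[OF oixy tab(3)], intro allI impI)
      fix i j assume i: "i < length xs" and j: "j < length a"
      have ik: "i < k" using i lenxs by simp
      have aj: "a ! j \<in> set a" "b ! j \<in> set b" using j lab by auto
      have cl: "\<bar>real (b ! j) - real (a ! j)\<bar> \<le> t" using cab j by blast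
      have c1: "a ! j < b ! j + h" "b ! j < a ! j + h" using cl h(1) by linarith+
      have xb: "xs ! i div h \<in> U" "ys ! i div h = xs ! i div h" using xblk[OF ik] by auto
      have "a ! j div h \<notin> U" "b ! j div h \<notin> U" using abblk aj by auto
      then have ne: "a ! j div h \<noteq> xs ! i div h" "b ! j div h \<noteq> xs ! i div h" using xb(1) by auto
      show "(xs ! i < a ! j \<longleftrightarrow> ys ! i < b ! j) \<and> (a ! j < xs ! i \<longleftrightarrow> b ! j < ys ! i)"
        by (rule prot[OF h(3) sym[OF xb(2)] ne c1])
    qed
    have dis: "set (xs @ a) \<inter> set (ys @ b) = {}"
    proof -
      have "set xs \<inter> set ys = {}"
      proof (rule ccontr)
        assume "set xs \<inter> set ys \<noteq> {}"
        then obtain T T' where TT: "T \<in> S0" "T' \<in> S0" "g1 T = g2 T'"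
          using Ls(2) by (auto simp: xs_def ys_def)
        show False
        proof (cases "T = T'")
          case True then show False using g(3) TT S0F by auto
        next
          case False then show False using Gneq[OF g(1,2)] TT S0F by blast
        qed
      qed
      then show ?thesis using tab(4) setxs abQ PQdis by auto
    qed
    have cl: "\<forall>i < length (xs @ a). \<bar>real ((ys @ b) ! i) - real ((xs @ a) ! i)\<bar> \<le> real n powr (2/5)"
    proof (intro allI impI)
      fix i assume i: "i < length (xs @ a)"
      show "\<bar>real ((ys @ b) ! i) - real ((xs @ a) ! i)\<bar> \<le> real n powr (2/5)"
      proof (cases "i < k")
        case True
        then have e: "ys ! i div h = xs ! i div h" using xblk by blast
        have "xs ! i < ys ! i + h" "ys ! i < xs ! i + h" using same_block_close[OF h(3)] e by metis+
        then have "\<bar>real (ys ! i) - real (xs ! i)\<bar> \<le> real (h - 1)" using h(3) by linarith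
        then show ?thesis using True lenxs h(4) s2 t_def by (simp add: nth_append)
      next
        case False
        then have "i - k < length a" using i lenxs by simp
        then show ?thesis using cab False lenxs s2 t_def by (simp add: nth_append)
      qed
    qed
    show "close_twins n \<pi> (xs @ a) (ys @ b)"
      unfolding close_twins_def twins_def using sub oi dis cl by blast
  qed
qed


end
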